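(* Let $q$ be a prime power and $n\ge 3$. If $\mathcal{L}$ is a Cameron-Liebler $(n-2)$-set of $\mathrm{AG}(n,q)$ with parameter $x$, then $\frac{x(x-1)}{2}\equiv 0 \pmod{q+1}$.
   Context: $\mathrm{AG}(n,q)$ is $\mathrm{PG}(n,q)$ with a hyperplane $\pi_\infty$ removed; affine $k$-spaces are $k$-dimensional projective subspaces not contained in $\pi_\infty$. With $A_n$ the incidence matrix of affine points versus affine $k$-spaces, a set $\mathcal{L}$ of affine $k$-spaces is a Cameron-Liebler $k$-set of $\mathrm{AG}(n,q)$ if its characteristic vector lies in the real row space $\mathrm{Im}(A_n^T)$; its parameter is $|\mathcal{L}|/\left[{n\atop k}\right]_q$, where $\left[{a\atop b}\right]_q=\frac{(q^a-1)\cdots(q^{a-b+1}-1)}{(q^b-1)\cdots(q-1)}$. *)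

theory Defs
  imports Complex_Main "HOL-Analysis.Finite_Cartesian_Product"
begin

text \<open>The affine space AG(n,q): points are vectors in F^n with F a finite field of
order q (F = 'a, n = CARD('n)).\<close>

definition lin_indep :: "nat \<Rightarrow> (nat \<Rightarrow> 'a::field ^ 'n) \<Rightarrow> bool" where
  "lin_indep k vs \<longleftrightarrow>
     (\<forall>c :: nat \<Rightarrow> 'a. (\<Sum>i<k. c i *s vs i) = 0 \<longrightarrow> (\<forall>i<k. c i = 0))"

definition affine_kspace :: "nat \<Rightarrow> ('a::field ^ 'n) set \<Rightarrow> bool" where
  "affine_kspace k S \<longleftrightarrow>
     (\<exists>p vs. lin_indep k vs \<and> S = {p + (\<Sum>i<k. c i *s vs i) | c :: nat \<Rightarrow> 'a. True})"

text \<open>Characteristic vector of L lies in the real row space Im(A^T) of the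
point/k-space incidence matrix A: there is f on points with
chi_L(S) = sum_{p in S} f(p) for every affine k-space S.\<close>

definition cameron_liebler_kset :: "nat \<Rightarrow> ('a::{finite,field} ^ 'n) set set \<Rightarrow> bool" where
  "cameron_liebler_kset k L \<longleftrightarrow>
     L \<subseteq> {S. affine_kspace k S} \<and>
     (\<exists>f :: 'a ^ 'n \<Rightarrow> real. \<forall>S. affine_kspace k S \<longrightarrow>
        (if S \<in> L then 1 else 0) = (\<Sum>p\<in>S. f p))"

definition gauss_binom :: "nat \<Rightarrow> nat \<Rightarrow> nat \<Rightarrow> real" where
  "gauss_binom q a b = (\<Prod>i<b. (real q ^ (a - i) - 1) / (real q ^ (i + 1) - 1))"

definition cl_parameter :: "nat \<Rightarrow> ('a::{finite,field} ^ 'n) set set \<Rightarrow> real" where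
  "cl_parameter k L = real (card L) / gauss_binom CARD('a) CARD('n) k"

end

theory Submission
  imports Defs "HOL-Analysis.Cartesian_Space"
begin


definition dt :: "'a::field^'m \<Rightarrow> 'a^'m \<Rightarrow> 'a" where
  "dt a v = (\<Sum>i\<in>UNIV. a$i * v$i)"

lemma dt_add_r: "dt a (u + v) = dt a u + dt a (v::'a::field^'m)"
  by (simp add: dt_def distrib_left sum.distrib)
lemma dt_smult_r: "dt a (t *s v) = t * dt a (v::'a::field^'m)"
  by (simp add: dt_def sum_distrib_left algebra_simps)
lemma dt_smult_l: "dt (t *s a) v = t * dt a (v::'a::field^'m)"
  by (simp add: dt_def sum_distrib_left algebra_simps)
lemma dt_diff_r: "dt a (u - v) = dt a u - dt a (v::'a::field^'m)"
  by (simp add: dt_def sum_subtractf algebra_simps)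
lemma dt_add_l: "dt (u + v) a = dt u a + dt v (a::'a::field^'m)"
  by (simp add: dt_def distrib_right sum.distrib)
lemma dt_diff_l: "dt (u - v) a = dt u a - dt v (a::'a::field^'m)"
  by (simp add: dt_def sum_subtractf algebra_simps)
lemma dt_comm: "dt a v = dt v (a::'a::field^'m)"
  by (simp add: dt_def mult.commute)
lemma dt_axis: "dt (axis i c) v = c * (v::'a::field^'m) $ i"
proof -
  have "dt (axis i c) v = (\<Sum>j\<in>UNIV. if j = i then c * v$i else 0)"
    unfolding dt_def axis_def by (rule sum.cong) auto
  then show ?thesis by simp
qed

lemma card_ge2: "CARD('a::{finite,field}) \<ge> 2"
proof -
  have "card {0::'a, 1} \<le> CARD('a)" by (rule card_mono) auto
  then show ?thesis by simp
qed

lemma sum_transl: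
  fixes h :: "'b::ab_group_add \<Rightarrow> real"
  shows "(\<Sum>u\<in>UNIV. h (u + v)) = (\<Sum>u\<in>UNIV. h u)"
  by (rule sum.reindex_bij_witness[of _ "\<lambda>u. u - v" "\<lambda>u. u + v"]) auto

lemma line_decomp:
  fixes F :: "'a::{finite,field}^'m \<Rightarrow> real"
  assumes b: "dt b d = 1"
    and P: "\<And>w t. w \<in> P \<longleftrightarrow> w + t *s d \<in> P"
  shows "(\<Sum>w\<in>P. F w) = (\<Sum>y\<in>{y\<in>P. dt b y = 0}. \<Sum>t\<in>UNIV. F (y + t *s d))"
proof -
  let ?T = "{y\<in>P. dt b y = 0}"
  have "(\<Sum>y\<in>?T. \<Sum>t\<in>UNIV. F (y + t *s d)) = (\<Sum>(y,t)\<in>?T \<times> UNIV. F (y + t *s d))"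
    by (rule sum.cartesian_product)
  also have "\<dots> = (\<Sum>w\<in>P. F w)"
  proof (rule sum.reindex_bij_witness[of _ "\<lambda>w. (w - dt b w *s d, dt b w)" "\<lambda>(y,t). y + t *s d"])
    fix w assume w: "w \<in> P"
    show "(\<lambda>(y, t). y + t *s d) (w - dt b w *s d, dt b w) = w" by simp
    have "w - dt b w *s d = w + (- dt b w) *s d"
      by (simp add: vector_smult_lneg)
    then have "w - dt b w *s d \<in> P" using P w by metis
    moreover have "dt b (w - dt b w *s d) = 0" by (simp add: dt_diff_r dt_smult_r b)
    ultimately show "(w - dt b w *s d, dt b w) \<in> ?T \<times> UNIV" by simp
  next
    fix yt assume yt: "yt \<in> ?T \<times> (UNIV::'a set)"
    obtain y t where [simp]: "yt = (y,t)" by force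
    have y: "y \<in> P" "dt b y = 0" using yt by auto
    have e: "dt b (y + t *s d) = t" by (simp add: dt_add_r dt_smult_r b y)
    show "(\<lambda>w. (w - dt b w *s d, dt b w)) ((\<lambda>(y, t). y + t *s d) yt) = yt"
      by (simp add: e)
    show "(\<lambda>(y, t). y + t *s d) yt \<in> P" using P y by simp
    show "F ((\<lambda>(y, t). y + t *s d) yt) = (case yt of (y, t) \<Rightarrow> F (y + t *s d))" by simp
  qed
  finally show ?thesis by simp
qed

lemma card_fiber:
  fixes v :: "'a::{finite,field}^'m"
  assumes v: "v \<noteq> 0"
  shows "card {a. dt a v = c} = CARD('a)^(CARD('m)-1)"
proof -
  obtain i where i: "v$i \<noteq> 0" using v by (metis vec_eq_iff zero_index)
  define a0 where "a0 = axis i (1 / v$i)"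
  have a0: "dt a0 v = 1" using i by (simp add: a0_def dt_axis)
  have eq: "card {a. dt a v = c} = card {a. dt a v = 0}" for c
  proof -
    have "bij_betw (\<lambda>a. a + c *s a0) {a. dt a v = 0} {a. dt a v = c}"
      by (rule bij_betw_byWitness[of _ "\<lambda>a. a - c *s a0"])
         (auto simp: dt_add_l dt_diff_l dt_smult_l a0 image_def intro!: exI[of _ "_ - c *s a0"])
    then show ?thesis by (simp add: bij_betw_same_card)
  qed
  have "CARD('a)^CARD('m) = card (UNIV :: ('a^'m) set)" by simp
  also have "\<dots> = (\<Sum>c\<in>UNIV. card {a. dt a v = c})"
    using sum.group[of "UNIV::('a^'m) set" "UNIV::'a set" "\<lambda>a. dt a v" "\<lambda>_. 1::nat"] by simp
  also have "\<dots> = (\<Sum>c\<in>(UNIV::'a set). card {a. dt a v = 0})" by (intro sum.cong refl) (rule eq)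
  also have "\<dots> = CARD('a) * card {a. dt a v = 0}" by simp
  finally have *: "CARD('a)^CARD('m) = CARD('a) * card {a. dt a v = 0}" .
  obtain k where k: "CARD('m) = Suc k" using not0_implies_Suc[of "CARD('m)"] by auto
  have "CARD('a)^CARD('m) = CARD('a) * CARD('a)^(CARD('m)-1)"
    by (simp add: k)
  with * have "card {a. dt a v = 0} = CARD('a)^(CARD('m)-1)" by simp
  then show ?thesis using eq[of c] by simp
qed

lemma sum_scale_nonzero:
  fixes h :: "'a::{finite,field}^'m \<Rightarrow> real"
  assumes t: "t \<noteq> 0"
  shows "(\<Sum>d\<in>-{0}. h (t *s d)) = (\<Sum>d\<in>-{0}. h d)"
  by (rule sum.reindex_bij_witness[of _ "\<lambda>d. (1/t) *s d" "\<lambda>d. t *s d"])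
     (auto simp: t vector_smult_assoc vec_eq_iff)


lemma card_nz: "real (card (-{0::'a::{finite,field}^'m})) = real CARD('a) ^ CARD('m) - 1"
proof -
  have "card (-{0::'a^'m}) = CARD('a^'m) - 1"
    by (simp add: Compl_eq_Diff_UNIV card_Diff_singleton)
  moreover have "CARD('a^'m) \<ge> 1" by (simp add: Suc_leI)
  ultimately show ?thesis by (simp add: of_nat_diff)
qed

lemma card_nz1: "real (card (-{0::'a::{finite,field}})) = real CARD('a) - 1"
proof -
  have "card (-{0::'a}) = CARD('a) - 1"
    by (simp add: Compl_eq_Diff_UNIV card_Diff_singleton)
  moreover have "CARD('a) \<ge> 1" by (simp add: Suc_leI)
  ultimately show ?thesis by (simp add: of_nat_diff)
qed

lemma sum_split0:
  fixes h :: "'b::{finite,zero} \<Rightarrow> real"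
  shows "(\<Sum>t\<in>UNIV. h t) = h 0 + (\<Sum>t\<in>-{0}. h t)"
proof -
  have "UNIV = insert 0 (-{0::'b})" by auto
  then show ?thesis by (metis Compl_iff finite insertI1 sum.insert)
qed

lemma Int_Coll: "R \<inter> {a. P a} = {a\<in>R. P a}" by auto

lemma sum_Collect:
  fixes g :: "'b::finite \<Rightarrow> real"
  shows "(\<Sum>w\<in>{w. P w}. g w) = (\<Sum>w\<in>UNIV. if P w then g w else 0)"
  using sum.inter_filter[of UNIV g P] by simp

lemma R_sum:
  fixes h :: "'a::{finite,field}^'m \<Rightarrow> real"
  assumes Rb: "bij_betw (\<lambda>(a,t). t *s a) (R \<times> -{0}) (-{0})"
  shows "(\<Sum>w\<in>-{0}. h w) = (\<Sum>a\<in>R. \<Sum>t\<in>-{0}. h (t *s a))"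
proof -
  have fR: "finite R" by simp
  have "(\<Sum>a\<in>R. \<Sum>t\<in>-{0}. h (t *s a)) = (\<Sum>(a,t)\<in>R \<times> -{0}. h (t *s a))"
    by (rule sum.cartesian_product)
  also have "\<dots> = (\<Sum>w\<in>-{0}. h w)"
    using sum.reindex_bij_betw[OF Rb, of h] by (simp add: case_prod_beta')
  finally show ?thesis by simp
qed

lemma R_card:
  assumes Rb: "bij_betw (\<lambda>(a,t). t *s a) (R \<times> -{0}) (-{0::'a::{finite,field}^'m})"
  shows "real (card R) * (real CARD('a) - 1) = real CARD('a) ^ CARD('m) - 1"
  using R_sum[OF Rb, of "\<lambda>_. 1"] by (simp add: card_nz card_nz1)

lemma R_kern:
  assumes Rb: "bij_betw (\<lambda>(a,t). t *s a) (R \<times> -{0}) (-{0::'a::{finite,field}^'m})"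
    and v: "v \<noteq> 0"
  shows "real (card {a\<in>R. dt a v = 0}) * (real CARD('a) - 1) = real CARD('a) ^ (CARD('m) - 1) - 1"
proof -
  let ?h = "\<lambda>w. if dt w v = 0 then 1 else (0::real)"
  have "real (card {a. dt a v = 0}) = (\<Sum>w\<in>UNIV. ?h w)"
    by (simp add: sum.If_cases)
  also have "\<dots> = 1 + (\<Sum>w\<in>-{0}. ?h w)" by (subst sum_split0) (simp add: dt_def)
  finally have 1: "(\<Sum>w\<in>-{0}. ?h w) = real CARD('a) ^ (CARD('m) - 1) - 1"
    using card_fiber[OF v, of 0] by simp
  have "(\<Sum>w\<in>-{0}. ?h w) = (\<Sum>a\<in>R. \<Sum>t\<in>-{0}. ?h (t *s a))" by (rule R_sum[OF Rb])
  also have "\<dots> = (\<Sum>a\<in>R. (real CARD('a) - 1) * (if dt a v = 0 then 1 else 0))"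
    by (intro sum.cong refl) (simp add: dt_smult_l card_nz1)
  also have "\<dots> = (real CARD('a) - 1) * real (card {a\<in>R. dt a v = 0})"
    by (simp add: sum_distrib_left[symmetric] sum.If_cases Int_Coll)
  finally show ?thesis using 1 by simp
qed

context
  fixes F :: "'a::{finite,field}^'m \<Rightarrow> real"
  assumes G01: "\<And>y d. d \<noteq> 0 \<Longrightarrow> (\<Sum>t\<in>UNIV. F (y + t *s d)) \<in> {0,1}"
begin

definition "GG y d = (\<Sum>t\<in>UNIV. F (y + t *s d))"

lemma GG_shift: "GG (u + s *s d) d = GG u d"
  unfolding GG_def
  by (rule sum.reindex_bij_witness[of _ "\<lambda>t. t - s" "\<lambda>t. t + s"])
     (simp_all add: vector_sadd_rdistrib add.commute add.left_commute)

lemma GG_sq: "d \<noteq> 0 \<Longrightarrow> GG u d * GG u d = GG u d"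
  using G01[of d u] unfolding GG_def by auto

lemma sum_GG: "(\<Sum>u\<in>UNIV. GG u d) = real CARD('a) * (\<Sum>u\<in>UNIV. F u)"
proof -
  have "(\<Sum>u\<in>UNIV. GG u d) = (\<Sum>t\<in>UNIV. \<Sum>u\<in>UNIV. F (u + t *s d))"
    unfolding GG_def by (rule sum.swap)
  also have "\<dots> = (\<Sum>t\<in>(UNIV::'a set). \<Sum>u\<in>UNIV. F u)"
    by (intro sum.cong refl sum_transl)
  finally show ?thesis by simp
qed

lemma sum_FGG:
  assumes d: "d \<noteq> 0"
  shows "(\<Sum>u\<in>UNIV. F u * GG u d) = (\<Sum>u\<in>UNIV. F u)"
proof -
  have q: "real CARD('a) \<noteq> 0" by simp
  have "real CARD('a) * (\<Sum>u\<in>UNIV. F u * GG u d)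
      = (\<Sum>s\<in>(UNIV::'a set). \<Sum>u\<in>UNIV. F u * GG u d)" by simp
  also have "\<dots> = (\<Sum>s\<in>UNIV. \<Sum>u\<in>UNIV. F (u + s *s d) * GG (u + s *s d) d)"
    by (rule sum.cong[OF refl]) (rule sum_transl[symmetric, where h="\<lambda>u. F u * GG u d"])
  also have "\<dots> = (\<Sum>s\<in>UNIV. \<Sum>u\<in>UNIV. F (u + s *s d) * GG u d)"
    by (simp only: GG_shift)
  also have "\<dots> = (\<Sum>u\<in>UNIV. GG u d * GG u d)"
    by (subst sum.swap) (simp add: GG_def sum_distrib_left sum_distrib_right mult.commute)
  also have "\<dots> = (\<Sum>u\<in>UNIV. GG u d)" by (rule sum.cong[OF refl]) (rule GG_sq[OF d])
  also have "\<dots> = real CARD('a) * (\<Sum>u\<in>UNIV. F u)" by (rule sum_GG)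
  finally show ?thesis using q by simp
qed


lemma lines_at:
  "(\<Sum>d\<in>-{0}. GG u d) = (real CARD('a) ^ CARD('m) - 1) * F u
     + (real CARD('a) - 1) * ((\<Sum>w\<in>UNIV. F w) - F u)"
proof -
  have "(\<Sum>d\<in>-{0}. GG u d) = (\<Sum>d\<in>-{0}. F u + (\<Sum>t\<in>-{0}. F (u + t *s d)))"
    unfolding GG_def by (intro sum.cong refl) (subst sum_split0, simp)
  also have "\<dots> = (real CARD('a) ^ CARD('m) - 1) * F u + (\<Sum>t\<in>-{0}. \<Sum>d\<in>-{0}. F (u + t *s d))"
    by (simp add: sum.distrib card_nz sum.swap[of _ "-{0::'a^'m}"])
  also have "(\<Sum>t\<in>-{0}. \<Sum>d\<in>-{0}. F (u + t *s d)) = (\<Sum>t\<in>-{0::'a}. \<Sum>d\<in>-{0}. F (u + d))"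
    by (rule sum.cong[OF refl], rule sum_scale_nonzero[where h="\<lambda>w. F (u + w)"], simp)
  also have "(\<Sum>d\<in>-{0}. F (u + d)) = (\<Sum>w\<in>UNIV. F w) - F u"
    using sum_split0[of "\<lambda>d. F (u + d)"] sum_transl[of F u] by (simp add: add.commute)
  finally show ?thesis by (simp add: card_nz1)
qed

lemma E1:
  "(real CARD('a) ^ CARD('m) - 1) * (\<Sum>w\<in>UNIV. F w) =
   (real CARD('a) ^ CARD('m) - 1) * (\<Sum>w\<in>UNIV. F w * F w)
   + (real CARD('a) - 1) * ((\<Sum>w\<in>UNIV. F w) * (\<Sum>w\<in>UNIV. F w) - (\<Sum>w\<in>UNIV. F w * F w))"
proof -
  let ?X = "\<Sum>w\<in>UNIV. F w"
  have "(\<Sum>u\<in>UNIV. F u * (\<Sum>d\<in>-{0}. GG u d)) = (\<Sum>d\<in>-{0}. \<Sum>u\<in>UNIV. F u * GG u d)"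
    by (simp add: sum_distrib_left sum.swap[of _ "UNIV::('a^'m) set"])
  also have "\<dots> = (\<Sum>d\<in>-{0::'a^'m}. ?X)" by (intro sum.cong refl sum_FGG) simp
  also have "\<dots> = (real CARD('a) ^ CARD('m) - 1) * ?X" by (simp add: card_nz)
  finally have 1: "(\<Sum>u\<in>UNIV. F u * (\<Sum>d\<in>-{0}. GG u d)) = (real CARD('a) ^ CARD('m) - 1) * ?X" .
  have "(\<Sum>u\<in>UNIV. F u * (\<Sum>d\<in>-{0}. GG u d)) =
     (\<Sum>u\<in>UNIV. (real CARD('a) ^ CARD('m) - 1) * (F u * F u) + (real CARD('a) - 1) * (F u * ?X) - (real CARD('a) - 1) * (F u * F u))"
    by (intro sum.cong refl) (simp add: lines_at algebra_simps)
  also have "\<dots> = (real CARD('a) ^ CARD('m) - 1) * (\<Sum>w\<in>UNIV. F w * F w)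
   + (real CARD('a) - 1) * (?X * ?X - (\<Sum>w\<in>UNIV. F w * F w))"
    by (simp add: sum.distrib sum_subtractf sum_distrib_left sum_distrib_right algebra_simps)
  finally show ?thesis using 1 by simp
qed

lemma X_int: "(\<Sum>w\<in>UNIV. F w) \<in> \<int>"
proof -
  obtain i :: 'm where True by simp
  let ?d = "axis i (1::'a)"
  have "(\<Sum>w\<in>UNIV. F w) = (\<Sum>y\<in>{y\<in>UNIV. dt ?d y = 0}. \<Sum>t\<in>UNIV. F (y + t *s ?d))"
    by (rule line_decomp) (simp_all add: dt_axis)
  also have "\<dots> \<in> \<int>"
  proof (rule Ints_sum)
    fix y
    have "?d \<noteq> 0" by simp
    from G01[OF this, of y] show "(\<Sum>t\<in>UNIV. F (y + t *s ?d)) \<in> \<int>" by auto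
  qed
  finally show ?thesis .
qed

definition "PP a c = (\<Sum>w\<in>{w. dt a w = c}. F w)"

lemma PP_int:
  assumes a: "a \<noteq> 0" and m: "CARD('m) \<ge> 2"
  shows "PP a c \<in> \<int>"
proof -
  have "card {d. dt d a = 0} = CARD('a)^(CARD('m)-1)" by (rule card_fiber[OF a])
  also have "\<dots> \<ge> CARD('a)^1" using m
    by (intro power_increasing) (simp_all add: Suc_leI)
  finally have "card {d::'a^'m. dt d a = 0} \<ge> 2"
    using card_ge2[where 'a='a] by simp
  then have "{d::'a^'m. dt d a = 0} \<noteq> {0}" by auto
  moreover have "(0::'a^'m) \<in> {d. dt d a = 0}" by (simp add: dt_def)
  ultimately obtain d where d: "dt d a = 0" "d \<noteq> 0" by blast
  obtain i where i: "d$i \<noteq> 0" using d(2) by (metis vec_eq_iff zero_index)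
  let ?b = "axis i (1 / d$i)"
  have b: "dt ?b d = 1" using i by (simp add: dt_axis)
  have "PP a c = (\<Sum>y\<in>{y\<in>{w. dt a w = c}. dt ?b y = 0}. \<Sum>t\<in>UNIV. F (y + t *s d))"
    unfolding PP_def
    by (rule line_decomp[OF b]) (simp add: dt_add_r dt_smult_r dt_comm[of a d] d)
  also have "\<dots> \<in> \<int>"
  proof (rule Ints_sum)
    fix y
    from G01[OF d(2), of y] show "(\<Sum>t\<in>UNIV. F (y + t *s d)) \<in> \<int>" by auto
  qed
  finally show ?thesis .
qed

lemma PP_sum: "(\<Sum>c\<in>UNIV. PP a c) = (\<Sum>w\<in>UNIV. F w)"
  unfolding PP_def using sum.group[of UNIV UNIV "\<lambda>w. dt a w" F] by simp

lemma PP_sq: "(\<Sum>u\<in>UNIV. F u * PP a (dt a u)) = (\<Sum>c\<in>UNIV. PP a c * PP a c)"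
proof -
  have "(\<Sum>u\<in>UNIV. F u * PP a (dt a u)) = (\<Sum>c\<in>UNIV. \<Sum>u\<in>{u\<in>UNIV. dt a u = c}. F u * PP a (dt a u))"
    using sum.group[of UNIV UNIV "\<lambda>w. dt a w" "\<lambda>u. F u * PP a (dt a u)"] by simp
  also have "\<dots> = (\<Sum>c\<in>UNIV. \<Sum>u\<in>{u. dt a u = c}. F u * PP a c)"
    by (intro sum.cong refl) auto
  also have "\<dots> = (\<Sum>c\<in>UNIV. PP a c * PP a c)"
    by (simp add: sum_distrib_right[symmetric] PP_def)
  finally show ?thesis .
qed

lemma planes_at:
  assumes Rb: "bij_betw (\<lambda>(a,t). t *s a) (R \<times> -{0}) (-{0::'a^'m})"
  shows "(\<Sum>a\<in>R. PP a (dt a u)) * (real CARD('a) - 1) = real (card R) * (real CARD('a) - 1) * F u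
     + (real CARD('a) ^ (CARD('m) - 1) - 1) * ((\<Sum>w\<in>UNIV. F w) - F u)"
proof -
  have "(\<Sum>a\<in>R. PP a (dt a u)) = (\<Sum>a\<in>R. \<Sum>w\<in>UNIV. if dt a (w - u) = 0 then F w else 0)"
    unfolding PP_def sum_Collect by (simp add: dt_diff_r)
  also have "\<dots> = (\<Sum>w\<in>UNIV. F w * real (card {a\<in>R. dt a (w - u) = 0}))"
    by (subst sum.swap) (simp add: sum.If_cases Int_Coll mult.commute)
  also have "\<dots> = (\<Sum>v\<in>UNIV. F (v + u) * real (card {a\<in>R. dt a v = 0}))"
    using sum_transl[of "\<lambda>w. F w * real (card {a\<in>R. dt a (w - u) = 0})" u] by simp
  also have "\<dots> = F u * real (card R) + (\<Sum>v\<in>-{0}. F (v + u) * real (card {a\<in>R. dt a v = 0}))"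
    by (subst sum_split0) (simp add: dt_def)
  finally have 1: "(\<Sum>a\<in>R. PP a (dt a u)) * (real CARD('a) - 1) = F u * real (card R) * (real CARD('a) - 1) +
     (\<Sum>v\<in>-{0}. F (v + u) * (real (card {a\<in>R. dt a v = 0}) * (real CARD('a) - 1)))"
    by (simp add: algebra_simps sum_distrib_left sum_distrib_right)
  have "(\<Sum>v\<in>-{0}. F (v + u) * (real (card {a\<in>R. dt a v = 0}) * (real CARD('a) - 1)))
      = (\<Sum>v\<in>-{0}. F (v + u) * (real CARD('a) ^ (CARD('m) - 1) - 1))"
    by (intro sum.cong refl) (simp add: R_kern[OF Rb])
  also have "\<dots> = (real CARD('a) ^ (CARD('m) - 1) - 1) * (\<Sum>v\<in>-{0}. F (v + u))"
    by (simp add: sum_distrib_right mult.commute)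
  also have "(\<Sum>v\<in>-{0}. F (v + u)) = (\<Sum>w\<in>UNIV. F w) - F u"
    using sum_split0[of "\<lambda>v. F (v + u)"] sum_transl[of F u] by simp
  finally show ?thesis using 1 by (simp add: algebra_simps)
qed

lemma E2:
  assumes Rb: "bij_betw (\<lambda>(a,t). t *s a) (R \<times> -{0}) (-{0::'a^'m})"
  shows "(\<Sum>a\<in>R. \<Sum>c\<in>UNIV. PP a c * PP a c) * (real CARD('a) - 1)
    = real (card R) * (real CARD('a) - 1) * (\<Sum>w\<in>UNIV. F w * F w)
      + (real CARD('a) ^ (CARD('m) - 1) - 1) * ((\<Sum>w\<in>UNIV. F w) * (\<Sum>w\<in>UNIV. F w) - (\<Sum>w\<in>UNIV. F w * F w))"
proof -
  have "(\<Sum>a\<in>R. \<Sum>c\<in>UNIV. PP a c * PP a c) = (\<Sum>a\<in>R. \<Sum>u\<in>UNIV. F u * PP a (dt a u))"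
    by (simp add: PP_sq)
  also have "\<dots> = (\<Sum>u\<in>UNIV. F u * (\<Sum>a\<in>R. PP a (dt a u)))"
    by (subst sum.swap) (simp add: sum_distrib_left)
  finally have "(\<Sum>a\<in>R. \<Sum>c\<in>UNIV. PP a c * PP a c) * (real CARD('a) - 1)
     = (\<Sum>u\<in>UNIV. F u * ((\<Sum>a\<in>R. PP a (dt a u)) * (real CARD('a) - 1)))"
    by (simp add: sum_distrib_right mult.assoc)
  also have "\<dots> = (\<Sum>u\<in>UNIV. F u * (real (card R) * (real CARD('a) - 1) * F u
     + (real CARD('a) ^ (CARD('m) - 1) - 1) * ((\<Sum>w\<in>UNIV. F w) - F u)))"
    by (simp only: planes_at[OF Rb])
  also have "\<dots> = real (card R) * (real CARD('a) - 1) * (\<Sum>w\<in>UNIV. F w * F w)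
      + (real CARD('a) ^ (CARD('m) - 1) - 1) * ((\<Sum>w\<in>UNIV. F w) * (\<Sum>w\<in>UNIV. F w) - (\<Sum>w\<in>UNIV. F w * F w))"
    by (simp add: algebra_simps sum.distrib sum_subtractf sum_distrib_left sum_distrib_right)
  finally show ?thesis .
qed

lemma half_int: "(z::real) \<in> \<int> \<Longrightarrow> z * (z - 1) / 2 \<in> \<int>"
proof -
  assume "z \<in> \<int>"
  then obtain n where n: "z = of_int n" by (auto elim: Ints_cases)
  have "even (n * (n - 1))" by auto
  then obtain k where k: "n * (n - 1) = 2 * k" by (elim evenE)
  have "z * (z - 1) / 2 = of_int k"
    using arg_cong[OF k, of real_of_int] by (simp add: n)
  then show ?thesis by simp
qed

lemma core_gen:
  assumes Rb: "bij_betw (\<lambda>(a,t). t *s a) (R \<times> -{0}) (-{0::'a^'m})"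
    and m3: "CARD('m) = 3"
  shows "\<exists>m::int. (\<Sum>w\<in>UNIV. F w) * ((\<Sum>w\<in>UNIV. F w) - 1) / 2 = of_int m * (real CARD('a) + 1)"
proof -
  define q where "q = real CARD('a)"
  define X where "X = (\<Sum>w\<in>UNIV. F w)"
  define S2 where "S2 = (\<Sum>w\<in>UNIV. F w * F w)"
  define r where "r = real (card R)"
  define Q where "Q = (\<Sum>a\<in>R. \<Sum>c\<in>UNIV. PP a c * PP a c)"
  have q2: "q \<ge> 2" unfolding q_def using card_ge2[where 'a='a] by linarith
  have q1: "q - 1 \<noteq> 0" using q2 by simp
  have "r * (q - 1) = q^3 - 1" using R_card[OF Rb] m3 by (simp add: r_def q_def)
  then have "r * (q - 1) = (q^2 + q + 1) * (q - 1)" by (simp add: algebra_simps power2_eq_square power3_eq_cube)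
  then have r: "r = q^2 + q + 1" using q1 by simp
  have "(q^3 - 1) * X = (q^3 - 1) * S2 + (q - 1) * (X * X - S2)"
    using E1 m3 by (simp add: q_def X_def S2_def)
  then have "(q - 1) * ((q^2+q+1) * X) = (q - 1) * ((q^2+q+1) * S2 + (X * X - S2))"
    by (simp add: algebra_simps power2_eq_square power3_eq_cube)
  then have e1: "(q^2+q+1) * X = (q^2+q+1) * S2 + (X * X - S2)" using q1 by simp
  have "Q * (q - 1) = r * (q - 1) * S2 + (q^2 - 1) * (X * X - S2)"
    using E2[OF Rb] m3 by (simp add: q_def X_def S2_def r_def Q_def)
  then have "(q - 1) * Q = (q - 1) * (r * S2 + (q + 1) * (X * X - S2))"
    by (simp add: algebra_simps power2_eq_square)
  then have e2: "Q = r * S2 + (q + 1) * (X * X - S2)" using q1 by simp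
  have e3: "(\<Sum>a\<in>R. \<Sum>c\<in>UNIV. PP a c) = r * X"
    by (simp add: PP_sum r_def X_def)
  define T where "T = (\<Sum>a\<in>R. \<Sum>c\<in>UNIV. PP a c * (PP a c - 1) / 2)"
  have T: "2 * T = Q - r * X"
  proof -
    have "2 * T = (\<Sum>a\<in>R. \<Sum>c\<in>UNIV. PP a c * PP a c - PP a c)"
      unfolding T_def sum_distrib_left by (intro sum.cong refl) (simp add: field_simps)
    also have "\<dots> = Q - r * X"
      unfolding Q_def e3[symmetric] by (simp add: sum_subtractf)
    finally show ?thesis .
  qed
  have Tint: "T \<in> \<int>"
    unfolding T_def
  proof (intro Ints_sum half_int PP_int)
    fix a assume "a \<in> R"
    then have "(a, 1::'a) \<in> R \<times> -{0}" by simp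
    from bij_betw_apply[OF Rb this] have "1 *s a \<in> -{0}" by simp
    then show "a \<noteq> 0" by simp
  qed (simp add: m3)
  have s2: "q * (q + 1) * S2 = (q^2+q+1) * X - X * X" using e1 by (simp add: algebra_simps power2_eq_square)
  have "(q + 1) * (2 * T) = (q + 1) * (r * S2 + (q + 1) * (X * X - S2) - r * X)"
    using T e2 by simp
  also have "\<dots> = q * (q * (q + 1) * S2) + (q + 1) * ((q + 1) * X * X - r * X)"
    by (simp add: r algebra_simps power2_eq_square)
  also have "\<dots> = (q^2+q+1) * (X * (X - 1))"
    by (simp only: s2) (simp add: r algebra_simps power2_eq_square)
  finally have key: "(q + 1) * T = (q^2+q+1) * (X * (X - 1) / 2)" by simp
  define Y where "Y = X * (X - 1) / 2"
  have Yint: "Y \<in> \<int>" unfolding Y_def X_def by (rule half_int[OF X_int])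
  have "Y = (q + 1) * (T - q * Y)"
    using key unfolding Y_def[symmetric] by (simp add: algebra_simps power2_eq_square)
  moreover have "T - q * Y \<in> \<int>" using Tint Yint by (simp add: q_def)
  then obtain m where "T - q * Y = of_int m" by (auto elim: Ints_cases)
  ultimately have "Y = of_int m * (q + 1)" by simp
  then show ?thesis unfolding Y_def X_def q_def by blast
qed
end


definition R3 :: "('a::field^3) set" where
  "R3 = {a. a$1 = 1 \<or> (a$1 = 0 \<and> a$2 = 1) \<or> (a$1 = 0 \<and> a$2 = 0 \<and> a$3 = 1)}"

lemma R3_inj_aux:
  fixes a b :: "'a::field^3"
  assumes "t \<noteq> 0" "s \<noteq> 0" "a \<in> R3" "b \<in> R3" "t *s a = s *s b"
  shows "t = s"
proof -
  have e: "t * a$i = s * b$i" for i using assms(5) by (metis vector_smult_component)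
  show ?thesis using assms(1-4) e[of 1] e[of 2] e[of 3] unfolding R3_def by auto
qed

lemma R3_bij: "bij_betw (\<lambda>(a,t). t *s a) (R3 \<times> -{0}) (-{0::'a::{finite,field}^3})"
proof -
  have inj: "inj_on (\<lambda>(a,t). t *s a) (R3 \<times> -{0::'a})"
  proof (rule inj_onI)
    fix x y assume x: "x \<in> R3 \<times> -{0::'a}" and y: "y \<in> R3 \<times> -{0::'a}"
      and e: "(\<lambda>(a,t). t *s a) x = (\<lambda>(a,t). t *s a) y"
    obtain a t where [simp]: "x = (a,t)" by force
    obtain b s where [simp]: "y = (b,s)" by force
    have ts: "t = s" using R3_inj_aux[of t s a b] x y e by auto
    have "a = b" using e x by (auto simp: ts vec_eq_iff)
    then show "x = y" using ts by simp
  qed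
  have im: "(\<lambda>(a,t). t *s a) ` (R3 \<times> -{0}) = (-{0::'a^3})"
  proof
    show "(\<lambda>(a,t). t *s a) ` (R3 \<times> -{0}) \<subseteq> (-{0::'a^3})"
    proof
      fix w assume "w \<in> (\<lambda>(a,t). t *s a) ` (R3 \<times> -{0::'a})"
      then obtain a t where w: "w = t *s a" "a \<in> R3" "t \<noteq> 0" by auto
      have "w$1 \<noteq> 0 \<or> w$2 \<noteq> 0 \<or> w$3 \<noteq> 0" using w unfolding R3_def by auto
      then show "w \<in> -{0}" by auto
    qed
  next
    show "(-{0::'a^3}) \<subseteq> (\<lambda>(a,t). t *s a) ` (R3 \<times> -{0})"
    proof
      fix w :: "'a^3" assume "w \<in> -{0}"
      then have w: "w \<noteq> 0" by simp
      have w3: "w$1 \<noteq> 0 \<or> w$2 \<noteq> 0 \<or> w$3 \<noteq> 0"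
      proof (rule ccontr)
        assume "\<not> ?thesis"
        then have "w = 0" by (simp add: vec_eq_iff forall_3)
        with w show False by simp
      qed
      define i where "i = (if w$1 \<noteq> 0 then 1 else if w$2 \<noteq> 0 then 2 else (3::3))"
      have wi: "w$i \<noteq> 0" using w3 by (auto simp: i_def)
      define a where "a = (1 / w$i) *s w"
      have "a \<in> R3" using w3 wi unfolding a_def R3_def i_def by auto
      moreover have "w = w$i *s a" using wi by (simp add: a_def vector_smult_assoc)
      ultimately show "w \<in> (\<lambda>(a,t). t *s a) ` (R3 \<times> -{0})" using wi
        by (auto intro!: image_eqI[of _ _ "(a, w$i)"])
    qed
  qed
  show ?thesis using inj im by (simp add: bij_betw_def)
qed

lemma core3:
  fixes F :: "'a::{finite,field}^3 \<Rightarrow> real"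
  assumes G01: "\<And>y d. d \<noteq> 0 \<Longrightarrow> (\<Sum>t\<in>UNIV. F (y + t *s d)) \<in> {0,1}"
  shows "\<exists>m::int. (\<Sum>w\<in>UNIV. F w) * ((\<Sum>w\<in>UNIV. F w) - 1) / 2 = of_int m * (real CARD('a) + 1)"
proof -
  have c: "CARD(3) = 3" by simp
  show ?thesis by (rule core_gen[OF G01 R3_bij c])
qed



definition spn :: "nat \<Rightarrow> (nat \<Rightarrow> 'a::field ^ 'n) \<Rightarrow> ('a^'n) set" where
  "spn k vs = {(\<Sum>i<k. c i *s vs i) | c. True}"

definition subsp :: "('a::field ^ 'n) set \<Rightarrow> bool" where
  "subsp W \<longleftrightarrow> 0 \<in> W \<and> (\<forall>u\<in>W. \<forall>v\<in>W. u + v \<in> W) \<and> (\<forall>c. \<forall>u\<in>W. c *s u \<in> W)"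

lemma lin_indep_cong:
  assumes "\<And>i. i < k \<Longrightarrow> vs i = ws i" shows "lin_indep k vs = lin_indep k ws"
proof -
  have "\<And>c. (\<Sum>i<k. c i *s vs i) = (\<Sum>i<k. c i *s ws i)" using assms by (intro sum.cong) auto
  then show ?thesis unfolding lin_indep_def by simp
qed

lemma spn_cong:
  assumes "\<And>i. i < k \<Longrightarrow> vs i = ws i" shows "spn k vs = spn k ws"
proof -
  have "\<And>c. (\<Sum>i<k. c i *s vs i) = (\<Sum>i<k. c i *s ws i)" using assms by (intro sum.cong) auto
  then show ?thesis unfolding spn_def by simp
qed

lemma spn_sub:
  assumes W: "subsp W" and vs: "\<And>i. i < k \<Longrightarrow> vs i \<in> W"
  shows "spn k vs \<subseteq> W"
proof
  fix v assume "v \<in> spn k vs"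
  then obtain c where v: "v = (\<Sum>i<k. c i *s vs i)" by (auto simp: spn_def)
  have "(\<Sum>i<j. c i *s vs i) \<in> W" if "j \<le> k" for j
    using that
  proof (induction j)
    case 0 then show ?case using W by (simp add: subsp_def)
  next
    case (Suc j)
    then have "(\<Sum>i<j. c i *s vs i) \<in> W" by simp
    moreover have "c j *s vs j \<in> W" using W vs Suc.prems by (simp add: subsp_def)
    ultimately show ?case using W by (simp add: subsp_def)
  qed
  then show "v \<in> W" using v by simp
qed

lemma spn_subsp: "subsp (spn k (vs :: nat \<Rightarrow> 'a::field^'n))"
  unfolding subsp_def spn_def
proof (intro conjI ballI allI)
  show "0 \<in> {\<Sum>i<k. c i *s vs i |c. True}"
    by (auto intro!: exI[of _ "\<lambda>_. 0"])
next
  fix u v assume "u \<in> {\<Sum>i<k. c i *s vs i |c. True}" "v \<in> {\<Sum>i<k. c i *s vs i |c. True}"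
  then obtain c d where "u = (\<Sum>i<k. c i *s vs i)" "v = (\<Sum>i<k. d i *s vs i)" by auto
  then have "u + v = (\<Sum>i<k. (c i + d i) *s vs i)" by (simp add: sum.distrib vector_sadd_rdistrib)
  then show "u + v \<in> {\<Sum>i<k. c i *s vs i |c. True}" by (auto intro!: exI[of _ "\<lambda>i. c i + d i"])
next
  fix a u assume "u \<in> {\<Sum>i<k. c i *s vs i |c. True}"
  then obtain c where "u = (\<Sum>i<k. c i *s vs i)" by auto
  then have "a *s u = (\<Sum>i<k. (a * c i) *s vs i)"
    by (simp add: vec_eq_iff sum_distrib_left mult.assoc)
  then show "a *s u \<in> {\<Sum>i<k. c i *s vs i |c. True}" by (auto intro!: exI[of _ "\<lambda>i. a * c i"])
qed

lemma in_spn: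
  assumes i: "i < k" shows "vs i \<in> spn k vs"
proof -
  have "(\<Sum>j<k. (if j = i then 1 else 0) *s vs j) = (\<Sum>j<k. if j = i then vs j else 0)"
    by (intro sum.cong) auto
  also have "\<dots> = vs i" using i by (simp add: sum.delta')
  finally show ?thesis unfolding spn_def by (auto intro!: exI[of _ "\<lambda>j. if j = i then 1 else 0"])
qed

lemma spn_card:
  assumes li: "lin_indep k (vs :: nat \<Rightarrow> 'a::{finite,field}^'n)"
  shows "card (spn k vs) = CARD('a) ^ k"
proof -
  let ?P = "PiE {..<k} (\<lambda>_. UNIV :: 'a set)"
  let ?g = "\<lambda>c. (\<Sum>i<k. c i *s vs i)"
  have im: "spn k vs = ?g ` ?P"
  proof
    show "spn k vs \<subseteq> ?g ` ?P"
    proof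
      fix v assume "v \<in> spn k vs"
      then obtain c where v: "v = ?g c" unfolding spn_def by blast
      have "v = ?g (restrict c {..<k})" unfolding v by (intro sum.cong) auto
      moreover have "restrict c {..<k} \<in> ?P" by simp
      ultimately show "v \<in> ?g ` ?P" by (rule image_eqI)
    qed
  next
    show "?g ` ?P \<subseteq> spn k vs"
    proof
      fix v assume "v \<in> ?g ` ?P"
      then obtain c where "v = ?g c" by blast
      then show "v \<in> spn k vs" unfolding spn_def by blast
    qed
  qed
  have inj: "inj_on ?g ?P"
  proof (rule inj_onI)
    fix c d assume c: "c \<in> ?P" and d: "d \<in> ?P" and e: "?g c = ?g d"
    have "(\<Sum>i<k. (c i - d i) *s vs i) = 0"
      using e by (simp add: vector_sub_rdistrib sum_subtractf)
    moreover have "(\<Sum>i<k. (c i - d i) *s vs i) = 0 \<longrightarrow> (\<forall>i<k. c i - d i = 0)"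
      using li unfolding lin_indep_def by (rule spec[where x="\<lambda>i. c i - d i"])
    ultimately have "\<forall>i<k. c i - d i = 0" by blast
    show "c = d"
    proof
      fix i show "c i = d i"
      proof (cases "i < k")
        case True then show ?thesis using \<open>\<forall>i<k. c i - d i = 0\<close> by simp
      next
        case False then show ?thesis using PiE_arb[OF c] PiE_arb[OF d] by simp
      qed
    qed
  qed
  have "card (spn k vs) = card ?P" unfolding im by (rule card_image[OF inj])
  also have "\<dots> = CARD('a) ^ k" by (simp add: card_PiE)
  finally show ?thesis .
qed

lemma indep_Suc:
  "lin_indep (Suc k) (vs :: nat \<Rightarrow> 'a::field^'n) \<longleftrightarrow> lin_indep k vs \<and> vs k \<notin> spn k vs"
proof
  assume li: "lin_indep (Suc k) vs"
  have "lin_indep k vs"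
    unfolding lin_indep_def
  proof (intro allI impI)
    fix c :: "nat \<Rightarrow> 'a" and i assume s: "(\<Sum>i<k. c i *s vs i) = 0" and i: "i < k"
    let ?c = "c(k := 0)"
    have "(\<Sum>i<Suc k. ?c i *s vs i) = (\<Sum>i<k. c i *s vs i)" by simp
    then have "\<forall>i<Suc k. ?c i = 0" using li s unfolding lin_indep_def by metis
    then show "c i = 0" using i by (metis fun_upd_other less_Suc_eq nat_neq_iff)
  qed
  moreover have "vs k \<notin> spn k vs"
  proof
    assume "vs k \<in> spn k vs"
    then obtain c where c: "vs k = (\<Sum>i<k. c i *s vs i)" by (auto simp: spn_def)
    let ?c = "(\<lambda>i. - c i)(k := 1)"
    have "(\<Sum>i<Suc k. ?c i *s vs i) = vs k - (\<Sum>i<k. c i *s vs i)"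
      by (simp add: vector_smult_lneg sum_negf)
    also have "\<dots> = 0" using c by simp
    finally have "\<forall>i<Suc k. ?c i = 0" using li unfolding lin_indep_def by metis
    then show False by auto
  qed
  ultimately show "lin_indep k vs \<and> vs k \<notin> spn k vs" ..
next
  assume a: "lin_indep k vs \<and> vs k \<notin> spn k vs"
  show "lin_indep (Suc k) vs"
    unfolding lin_indep_def
  proof (intro allI impI)
    fix c :: "nat \<Rightarrow> 'a" and i assume s: "(\<Sum>i<Suc k. c i *s vs i) = 0" and i: "i < Suc k"
    have ck: "c k = 0"
    proof (rule ccontr)
      assume ck: "c k \<noteq> 0"
      have "c k *s vs k = - (\<Sum>i<k. c i *s vs i)" using s by (simp add: eq_neg_iff_add_eq_0 add.commute)
      have "vs k = (1 / c k) *s (c k *s vs k)" using ck by (simp add: vector_smult_assoc)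
      also have "\<dots> = (1 / c k) *s (- (\<Sum>i<k. c i *s vs i))" using \<open>c k *s vs k = _\<close> by simp
      also have "\<dots> = (\<Sum>i<k. (- c i / c k) *s vs i)"
        by (simp add: vec_eq_iff sum_distrib_left sum_negf[symmetric])
      finally have "vs k = (\<Sum>i<k. (- c i / c k) *s vs i)" .
      then have "vs k \<in> spn k vs" unfolding spn_def
        by (intro CollectI exI[of _ "\<lambda>i. - c i / c k"]) simp
      with a show False by simp
    qed
    then have "(\<Sum>i<k. c i *s vs i) = 0" using s by simp
    then have "\<forall>i<k. c i = 0" using a unfolding lin_indep_def by blast
    then show "c i = 0" using i ck less_Suc_eq by auto
  qed
qed


definition indeps :: "nat \<Rightarrow> ('a::field^'n) set \<Rightarrow> (nat \<Rightarrow> 'a^'n) set" where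
  "indeps k W = {vs \<in> PiE {..<k} (\<lambda>_. W). lin_indep k vs}"

lemma indeps_Suc:
  fixes W :: "('a::{finite,field}^'n) set"
  assumes W: "subsp W"
  shows "indeps (Suc k) W = (\<lambda>(vs,v). vs(k := v)) ` (SIGMA vs:indeps k W. W - spn k vs)"
proof
  show "indeps (Suc k) W \<subseteq> (\<lambda>(vs,v). vs(k := v)) ` (SIGMA vs:indeps k W. W - spn k vs)"
  proof
    fix ws assume ws: "ws \<in> indeps (Suc k) W"
    let ?vs = "ws(k := undefined)"
    have li: "lin_indep (Suc k) ws" and pw: "ws \<in> PiE {..<Suc k} (\<lambda>_. W)"
      using ws by (auto simp: indeps_def)
    have eq: "\<And>i. i < k \<Longrightarrow> ?vs i = ws i" by simp
    have "?vs \<in> PiE {..<k} (\<lambda>_. W)"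
      using pw by (auto simp: PiE_iff extensional_def)
    moreover have "lin_indep k ?vs"
    proof -
      have "lin_indep k ws" using li by (simp add: indep_Suc)
      then show ?thesis by (simp only: lin_indep_cong[OF eq])
    qed
    ultimately have "?vs \<in> indeps k W" by (simp add: indeps_def)
    moreover have "ws k \<in> W - spn k ?vs"
    proof -
      have "ws k \<notin> spn k ws" using li by (simp add: indep_Suc)
      moreover have "ws k \<in> W" using pw by (simp add: PiE_iff)
      ultimately show ?thesis by (simp only: spn_cong[OF eq] Diff_iff) simp
    qed
    ultimately have "(?vs, ws k) \<in> (SIGMA vs:indeps k W. W - spn k vs)" by blast
    moreover have "ws = (\<lambda>(vs,v). vs(k := v)) (?vs, ws k)" by simp
    ultimately show "ws \<in> (\<lambda>(vs,v). vs(k := v)) ` (SIGMA vs:indeps k W. W - spn k vs)"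
      by (rule rev_image_eqI)
  qed
next
  show "(\<lambda>(vs,v). vs(k := v)) ` (SIGMA vs:indeps k W. W - spn k vs) \<subseteq> indeps (Suc k) W"
  proof
    fix ws assume "ws \<in> (\<lambda>(vs,v). vs(k := v)) ` (SIGMA vs:indeps k W. W - spn k vs)"
    then obtain vs v where vs: "vs \<in> indeps k W" and v: "v \<in> W" "v \<notin> spn k vs"
      and ws: "ws = vs(k := v)" by auto
    have eq: "\<And>i. i < k \<Longrightarrow> ws i = vs i" using ws by simp
    have li: "lin_indep k vs" and pv: "vs \<in> PiE {..<k} (\<lambda>_. W)" using vs by (auto simp: indeps_def)
    have "lin_indep (Suc k) ws"
    proof -
      have "lin_indep k ws" using li by (simp only: lin_indep_cong[OF eq])
      moreover have "ws k \<notin> spn k ws"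
      proof -
        have "spn k ws = spn k vs" by (rule spn_cong[OF eq])
        moreover have "ws k = v" using ws by simp
        ultimately show ?thesis using v(2) by simp
      qed
      ultimately show ?thesis by (simp only: indep_Suc) simp
    qed
    moreover have "ws \<in> PiE {..<Suc k} (\<lambda>_. W)"
      using pv v ws by (auto simp: PiE_iff extensional_def)
    ultimately show "ws \<in> indeps (Suc k) W" by (simp add: indeps_def)
  qed
qed

lemma indeps_card:
  fixes W :: "('a::{finite,field}^'n) set"
  assumes W: "subsp W" and cW: "card W = CARD('a) ^ m"
  shows "k \<le> m \<Longrightarrow> card (indeps k W) = (\<Prod>j<k. CARD('a) ^ m - CARD('a) ^ j)"
proof (induction k)
  case 0
  have "indeps 0 W = {\<lambda>_. undefined}" by (auto simp: indeps_def lin_indep_def PiE_iff extensional_def)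
  then show ?case by simp
next
  case (Suc k)
  have inj: "inj_on (\<lambda>(vs,v). vs(k := v)) (SIGMA vs:indeps k W. W - spn k vs)"
  proof (rule inj_onI)
    fix x y assume x: "x \<in> (SIGMA vs:indeps k W. W - spn k vs)" and y: "y \<in> (SIGMA vs:indeps k W. W - spn k vs)"
      and e: "(\<lambda>(vs,v). vs(k := v)) x = (\<lambda>(vs,v). vs(k := v)) y"
    obtain vs v where [simp]: "x = (vs, v)" by force
    obtain ws w where [simp]: "y = (ws, w)" by force
    have pv: "vs \<in> PiE {..<k} (\<lambda>_. W)" and pw: "ws \<in> PiE {..<k} (\<lambda>_. W)"
      using x y by (auto simp: indeps_def)
    have e': "vs(k := v) = ws(k := w)" using e by simp
    have "v = w" using fun_cong[OF e', of k] by simp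
    moreover have "vs = ws"
    proof
      fix i show "vs i = ws i"
      proof (cases "i = k")
        case True then show ?thesis using PiE_arb[OF pv, of k] PiE_arb[OF pw, of k] by simp
      next
        case False then show ?thesis using fun_cong[OF e', of i] by simp
      qed
    qed
    ultimately show "x = y" by simp
  qed
  have fin: "finite (indeps k W)"
    by (rule finite_subset[of _ "PiE {..<k} (\<lambda>_. W)"]) (auto simp: indeps_def intro: finite_PiE)
  have "card (indeps (Suc k) W) = card (SIGMA vs:indeps k W. W - spn k vs)"
    unfolding indeps_Suc[OF W] by (rule card_image[OF inj])
  also have "\<dots> = (\<Sum>vs\<in>indeps k W. card (W - spn k vs))"
    by (rule card_SigmaI) (simp_all add: fin)
  also have "\<dots> = (\<Sum>vs\<in>indeps k W. CARD('a) ^ m - CARD('a) ^ k)"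
  proof (rule sum.cong[OF refl])
    fix vs assume "vs \<in> indeps k W"
    then have li: "lin_indep k vs" and pv: "vs \<in> PiE {..<k} (\<lambda>_. W)" by (auto simp: indeps_def)
    have sub: "spn k vs \<subseteq> W" by (rule spn_sub[OF W]) (use pv in auto)
    show "card (W - spn k vs) = CARD('a) ^ m - CARD('a) ^ k"
      using card_Diff_subset[OF _ sub] spn_card[OF li] cW by simp
  qed
  also have "\<dots> = card (indeps k W) * (CARD('a) ^ m - CARD('a) ^ k)" by simp
  also have "\<dots> = (\<Prod>j<Suc k. CARD('a) ^ m - CARD('a) ^ j)" using Suc by simp
  finally show ?case .
qed

definition subs :: "nat \<Rightarrow> ('a::field^'n) set set" where
  "subs k = {W. \<exists>vs. lin_indep k vs \<and> W = spn k vs}"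

lemma subs_count:
  assumes kN: "k \<le> CARD('n)"
  shows "card (subs k :: ('a::{finite,field}^'n) set set) * (\<Prod>j<k. CARD('a) ^ k - CARD('a) ^ j)
     = (\<Prod>j<k. CARD('a) ^ CARD('n) - CARD('a) ^ j)"
proof -
  let ?I = "indeps k (UNIV :: ('a^'n) set)"
  have U: "subsp (UNIV :: ('a^'n) set)" by (simp add: subsp_def)
  have cI: "card ?I = (\<Prod>j<k. CARD('a) ^ CARD('n) - CARD('a) ^ j)"
    by (rule indeps_card[OF U _ kN]) simp
  have fS: "finite (subs k :: ('a^'n) set set)" by (rule finite_subset[of _ UNIV]) auto
  have fI: "finite ?I"
    by (rule finite_subset[of _ "PiE {..<k} (\<lambda>_. UNIV)"]) (auto simp: indeps_def intro: finite_PiE)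
  have img: "spn k ` ?I \<subseteq> subs k" by (auto simp: indeps_def subs_def)
  have "card ?I = (\<Sum>W\<in>subs k. card {vs\<in>?I. spn k vs = W})"
    using sum.group[OF fI fS img, of "\<lambda>_. 1::nat"] by simp
  also have "\<dots> = (\<Sum>W\<in>(subs k :: ('a^'n) set set). \<Prod>j<k. CARD('a) ^ k - CARD('a) ^ j)"
  proof (rule sum.cong[OF refl])
    fix W :: "('a^'n) set" assume "W \<in> subs k"
    then obtain ws where ws: "lin_indep k ws" "W = spn k ws" by (auto simp: subs_def)
    have sW: "subsp W" using ws spn_subsp by simp
    have cW: "card W = CARD('a) ^ k" using ws spn_card by simp
    have "{vs\<in>?I. spn k vs = W} = indeps k W"
    proof
      show "{vs\<in>?I. spn k vs = W} \<subseteq> indeps k W"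
      proof
        fix vs assume vs: "vs \<in> {vs\<in>?I. spn k vs = W}"
        then have "\<And>i. i < k \<Longrightarrow> vs i \<in> W" using in_spn by blast
        moreover have "vs \<in> PiE {..<k} (\<lambda>_. UNIV)" using vs by (simp add: indeps_def)
        ultimately have "vs \<in> PiE {..<k} (\<lambda>_. W)" by (auto simp: PiE_iff)
        then show "vs \<in> indeps k W" using vs by (simp add: indeps_def)
      qed
    next
      show "indeps k W \<subseteq> {vs\<in>?I. spn k vs = W}"
      proof
        fix vs assume vs: "vs \<in> indeps k W"
        then have li: "lin_indep k vs" and pv: "vs \<in> PiE {..<k} (\<lambda>_. W)" by (auto simp: indeps_def)
        have sub: "spn k vs \<subseteq> W" by (rule spn_sub[OF sW]) (use pv in auto)
        have "spn k vs = W" by (rule card_subset_eq[OF _ sub]) (simp_all add: cW spn_card[OF li])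
        moreover have "vs \<in> ?I" using li pv by (auto simp: indeps_def PiE_iff)
        ultimately show "vs \<in> {vs\<in>?I. spn k vs = W}" by simp
      qed
    qed
    then show "card {vs\<in>?I. spn k vs = W} = (\<Prod>j<k. CARD('a) ^ k - CARD('a) ^ j)"
      using indeps_card[OF sW cW] by simp
  qed
  also have "\<dots> = card (subs k :: ('a^'n) set set) * (\<Prod>j<k. CARD('a) ^ k - CARD('a) ^ j)" by simp
  finally show ?thesis using cI by simp
qed

lemma affine_through:
  fixes S :: "('a::field^'n) set"
  assumes "affine_kspace k S" and p: "p \<in> S"
  shows "\<exists>vs. lin_indep k vs \<and> S = (\<lambda>w. p + w) ` spn k vs"
proof -
  obtain p0 vs where li: "lin_indep k vs" and S: "S = {p0 + (\<Sum>i<k. c i *s vs i) | c. True}"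
    using assms(1) unfolding affine_kspace_def by blast
  obtain c0 where c0: "p = p0 + (\<Sum>i<k. c0 i *s vs i)" using p S by blast
  have "S = (\<lambda>w. p + w) ` spn k vs"
  proof
    show "S \<subseteq> (\<lambda>w. p + w) ` spn k vs"
    proof
      fix x assume "x \<in> S"
      then obtain c where x: "x = p0 + (\<Sum>i<k. c i *s vs i)" using S by blast
      have "x = p + (\<Sum>i<k. (c i - c0 i) *s vs i)"
        unfolding x c0 by (simp add: vector_sub_rdistrib sum_subtractf)
      moreover have "(\<Sum>i<k. (c i - c0 i) *s vs i) \<in> spn k vs" unfolding spn_def
        by (intro CollectI exI[of _ "\<lambda>i. c i - c0 i"]) simp
      ultimately show "x \<in> (\<lambda>w. p + w) ` spn k vs" by (rule image_eqI)
    qed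
  next
    show "(\<lambda>w. p + w) ` spn k vs \<subseteq> S"
    proof
      fix x assume "x \<in> (\<lambda>w. p + w) ` spn k vs"
      then obtain c where x: "x = p + (\<Sum>i<k. c i *s vs i)" unfolding spn_def by blast
      have "x = p0 + (\<Sum>i<k. (c0 i + c i) *s vs i)"
        unfolding x c0 by (simp add: vector_sadd_rdistrib sum.distrib add.assoc)
      then show "x \<in> S" unfolding S by (intro CollectI exI[of _ "\<lambda>i. c0 i + c i"]) simp
    qed
  qed
  with li show ?thesis by blast
qed

lemma through_eq:
  "{S. affine_kspace k S \<and> p \<in> S} = (\<lambda>W. (\<lambda>w. p + w) ` W) ` (subs k :: ('a::field^'n) set set)"
proof
  show "{S. affine_kspace k S \<and> p \<in> S} \<subseteq> (\<lambda>W. (\<lambda>w. p + w) ` W) ` subs k"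
  proof
    fix S assume "S \<in> {S. affine_kspace k S \<and> p \<in> S}"
    then obtain vs where "lin_indep k vs" "S = (\<lambda>w. p + w) ` spn k vs"
      using affine_through by blast
    then show "S \<in> (\<lambda>W. (\<lambda>w. p + w) ` W) ` subs k" unfolding subs_def by blast
  qed
next
  show "(\<lambda>W. (\<lambda>w. p + w) ` W) ` subs k \<subseteq> {S. affine_kspace k S \<and> p \<in> S}"
  proof
    fix S assume "S \<in> (\<lambda>W. (\<lambda>w. p + w) ` W) ` subs k"
    then obtain vs where li: "lin_indep k vs" and S: "S = (\<lambda>w. p + w) ` spn k vs"
      unfolding subs_def by blast
    have "S = {p + (\<Sum>i<k. c i *s vs i) | c. True}" unfolding S spn_def by blast
    then have "affine_kspace k S" unfolding affine_kspace_def using li by blast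
    moreover have "p \<in> S"
    proof -
      have "(0::'a^'n) \<in> spn k vs" unfolding spn_def
        by (intro CollectI exI[of _ "\<lambda>_. 0"]) simp
      then show ?thesis unfolding S by force
    qed
    ultimately show "S \<in> {S. affine_kspace k S \<and> p \<in> S}" by simp
  qed
qed

lemma card_through:
  fixes p :: "'a::{finite,field}^'n"
  shows "card {S. affine_kspace k S \<and> p \<in> S} = card (subs k :: ('a::{finite,field}^'n) set set)"
proof -
  have "inj_on (\<lambda>W. (\<lambda>w. p + w) ` W) (subs k :: ('a^'n) set set)"
  proof (rule inj_onI)
    fix A B :: "('a^'n) set" assume "(\<lambda>w. p + w) ` A = (\<lambda>w. p + w) ` B"
    moreover have "inj (\<lambda>w::'a^'n. p + w)" by (rule injI) simp
    ultimately show "A = B" by (simp add: inj_image_eq_iff)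
  qed
  then show ?thesis unfolding through_eq by (rule card_image)
qed

lemma card_L:
  fixes L :: "('a::{finite,field}^'n) set set"
  assumes "cameron_liebler_kset k L"
  shows "\<exists>f :: 'a^'n \<Rightarrow> real. (\<forall>S. affine_kspace k S \<longrightarrow> (if S \<in> L then 1 else 0) = (\<Sum>p\<in>S. f p))
     \<and> real (card L) = (\<Sum>p\<in>UNIV. f p) * real (card (subs k :: ('a^'n) set set))"
proof -
  obtain f :: "'a^'n \<Rightarrow> real" where f: "\<forall>S. affine_kspace k S \<longrightarrow> (if S \<in> L then 1 else 0) = (\<Sum>p\<in>S. f p)"
    and LA: "L \<subseteq> {S. affine_kspace k S}"
    using assms unfolding cameron_liebler_kset_def by blast
  let ?A = "{S :: ('a^'n) set. affine_kspace k S}"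
  have fA: "finite ?A" by simp
  have "real (card L) = (\<Sum>S\<in>?A. if S \<in> L then 1 else 0)"
    using LA fA by (simp add: sum.If_cases Int_absorb1)
  also have "\<dots> = (\<Sum>S\<in>?A. \<Sum>p\<in>S. f p)" using f by (intro sum.cong refl) simp
  also have "\<dots> = (\<Sum>S\<in>?A. \<Sum>p\<in>UNIV. if p \<in> S then f p else 0)"
    by (rule sum.cong[OF refl]) (simp add: sum.If_cases)
  also have "\<dots> = (\<Sum>p\<in>UNIV. \<Sum>S\<in>?A. if p \<in> S then f p else 0)" by (rule sum.swap)
  also have "\<dots> = (\<Sum>p\<in>UNIV. f p * real (card {S. affine_kspace k S \<and> p \<in> S}))"
    by (intro sum.cong refl) (simp add: sum.If_cases Int_Coll mult.commute)
  also have "\<dots> = (\<Sum>p\<in>UNIV. f p) * real (card (subs k :: ('a^'n) set set))"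
    by (simp add: card_through sum_distrib_right)
  finally show ?thesis using f by blast
qed

lemma prod_pow_split:
  fixes q :: real
  assumes "k \<le> N"
  shows "(\<Prod>j<k. q ^ N - q ^ j) = (\<Prod>j<k. q ^ j) * (\<Prod>j<k. q ^ (N - j) - 1)"
proof -
  have "(\<Prod>j<k. q ^ N - q ^ j) = (\<Prod>j<k. q ^ j * (q ^ (N - j) - 1))"
  proof (rule prod.cong[OF refl])
    fix j assume "j \<in> {..<k}"
    then have "j \<le> N" using assms by simp
    then have "q ^ N = q ^ j * q ^ (N - j)" by (simp add: power_add[symmetric])
    then show "q ^ N - q ^ j = q ^ j * (q ^ (N - j) - 1)" by (simp add: algebra_simps)
  qed
  then show ?thesis by (simp add: prod.distrib)
qed

lemma gauss_subs:
  assumes kN: "k \<le> CARD('n)"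
  shows "real (card (subs k :: ('a::{finite,field}^'n) set set)) = gauss_binom CARD('a) CARD('n) k"
proof -
  define q where "q = real CARD('a)"
  define C where "C = real (card (subs k :: ('a^'n) set set))"
  have q2: "q \<ge> 2" unfolding q_def using card_ge2[where 'a='a] by simp
  have le: "\<And>j m. j \<le> m \<Longrightarrow> CARD('a) ^ j \<le> CARD('a) ^ m"
    by (rule power_increasing) (simp_all add: Suc_leI)
  have "real (card (subs k :: ('a^'n) set set) * (\<Prod>j<k. CARD('a) ^ k - CARD('a) ^ j))
     = real (\<Prod>j<k. CARD('a) ^ CARD('n) - CARD('a) ^ j)"
    using subs_count[OF kN, where 'a='a] by simp
  then have "C * (\<Prod>j<k. q ^ k - q ^ j) = (\<Prod>j<k. q ^ CARD('n) - q ^ j)"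
    unfolding C_def q_def of_nat_mult of_nat_prod
    using kN by (simp add: of_nat_diff le)
  then have "C * ((\<Prod>j<k. q ^ j) * (\<Prod>j<k. q ^ (k - j) - 1)) = (\<Prod>j<k. q ^ j) * (\<Prod>j<k. q ^ (CARD('n) - j) - 1)"
    using prod_pow_split[OF kN, of q] prod_pow_split[of k k q] by simp
  moreover have "(\<Prod>j<k. q ^ j) \<noteq> 0" using q2 by (simp add: prod_zero_iff)
  ultimately have e: "C * (\<Prod>j<k. q ^ (k - j) - 1) = (\<Prod>j<k. q ^ (CARD('n) - j) - 1)" by simp
  have r: "(\<Prod>j<k. q ^ (k - j) - 1) = (\<Prod>i<k. q ^ (i + 1) - 1)"
    by (rule prod.reindex_bij_witness[of _ "\<lambda>i. k - 1 - i" "\<lambda>i. k - 1 - i"])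
       (auto simp: Suc_diff_Suc)
  have pos: "\<And>i. q ^ (i + 1) - 1 > 0"
  proof -
    fix i :: nat
    have a: "1 \<le> q ^ i" using q2 by (simp add: one_le_power)
    have "2 * 1 \<le> q * q ^ i" by (rule mult_mono) (use q2 a in auto)
    then show "q ^ (i + 1) - 1 > 0" by simp
  qed
  have B: "(\<Prod>i<k. q ^ (i + 1) - 1) \<noteq> 0" using pos by (simp add: prod_zero_iff) (metis less_irrefl)
  have "gauss_binom CARD('a) CARD('n) k = (\<Prod>i<k. q ^ (CARD('n) - i) - 1) / (\<Prod>i<k. q ^ (i + 1) - 1)"
    unfolding gauss_binom_def q_def by (simp add: prod_dividef)
  also have "\<dots> = C" using e r B by (simp add: field_simps)
  finally show ?thesis unfolding C_def by simp
qed


lemma axis_comp: "axis k (x::'a::zero) $ i = (if i = k then x else 0)"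
  by (simp add: axis_def)

lemma gauss_pos:
  assumes "k \<le> N" "q \<ge> 2"
  shows "gauss_binom q N k > 0"
  unfolding gauss_binom_def
proof (rule prod_pos)
  fix i assume i: "i \<in> {..<k}"
  have pos: "real q ^ j - 1 > 0" if j1: "j \<ge> 1" for j
  proof -
    have a: "1 \<le> real q ^ (j - 1)" using assms by (simp add: one_le_power)
    have "2 * 1 \<le> real q * real q ^ (j - 1)" by (rule mult_mono) (use assms a in auto)
    moreover have "real q * real q ^ (j - 1) = real q ^ j"
    proof -
      obtain j' where "j = Suc j'" using j1 by (cases j) auto
      then show ?thesis by simp
    qed
    ultimately show ?thesis by simp
  qed
  show "(real q ^ (N - i) - 1) / (real q ^ (i + 1) - 1) > 0"
    by (intro divide_pos_pos pos) (use i assms in auto)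
qed

context
  fixes h :: "3 \<Rightarrow> 'n::finite" and e :: "nat \<Rightarrow> 'n" and m :: nat
  assumes hinj: "inj h"
    and ebij: "bij_betw e {..<m} (UNIV - range h)"
begin

definition prj :: "'a::field^'n \<Rightarrow> 'a^3" where
  "prj v = (\<chi> j. v $ h j)"

definition lift :: "'a::field^3 \<Rightarrow> 'a^'n" where
  "lift z = (\<chi> i. if i \<in> range h then z $ (inv h i) else 0)"

definition asum :: "(nat \<Rightarrow> 'a::field) \<Rightarrow> 'a^'n" where
  "asum c = (\<Sum>j<m. c j *s axis (e j) 1)"

lemma e_notin: "j < m \<Longrightarrow> e j \<notin> range h"
  using ebij unfolding bij_betw_def by auto

lemma e_inj: "j < m \<Longrightarrow> j' < m \<Longrightarrow> e j = e j' \<longleftrightarrow> j = j'"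
  using ebij unfolding bij_betw_def inj_on_def by auto

lemma idx_cases: "(\<exists>j. i = h j) \<or> (\<exists>j<m. i = e j)"
proof (cases "i \<in> range h")
  case True then show ?thesis by auto
next
  case False
  then have "i \<in> e ` {..<m}" using ebij unfolding bij_betw_def by auto
  then show ?thesis by auto
qed

lemma lift_h [simp]: "lift z $ h j = z $ j"
  unfolding lift_def using hinj by (simp add: inv_f_f)

lemma lift_e [simp]: "j < m \<Longrightarrow> lift z $ e j = 0"
  unfolding lift_def using e_notin by simp

lemma asum_h [simp]: "asum c $ h j = 0"
proof -
  have "asum c $ h j = (\<Sum>j'<m. c j' * (axis (e j') 1 $ h j))"
    unfolding asum_def by simp
  also have "\<dots> = 0"
  proof (intro sum.neutral ballI)
    fix x assume "x \<in> {..<m}"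
    then have "e x \<notin> range h" using e_notin[of x] by simp
    then have "h j \<noteq> e x" by (metis rangeI)
    then show "c x * (axis (e x) 1 $ h j) = 0" by (simp add: axis_comp)
  qed
  finally show ?thesis .
qed

lemma asum_e [simp]: "j < m \<Longrightarrow> asum c $ e j = c j"
proof -
  assume j: "j < m"
  have "asum c $ e j = (\<Sum>j'<m. c j' * (axis (e j') 1 $ e j))"
    unfolding asum_def by simp
  also have "\<dots> = (\<Sum>j'<m. if j' = j then c j' else 0)"
    by (intro sum.cong refl) (use j in \<open>auto simp: axis_comp e_inj\<close>)
  also have "\<dots> = c j" using j by (simp add: sum.delta')
  finally show ?thesis .
qed

lemma prj_comp [simp]: "prj v $ j = v $ h j"
  unfolding prj_def by simp

definition vsd :: "'a::field^3 \<Rightarrow> nat \<Rightarrow> 'a^'n" where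
  "vsd d i = (case i of 0 \<Rightarrow> lift d | Suc j \<Rightarrow> axis (e j) 1)"

lemma vsd_sum: "(\<Sum>i<Suc m. c i *s vsd d i) = c 0 *s lift d + asum (\<lambda>j. c (Suc j))"
  by (simp only: sum.lessThan_Suc_shift) (simp add: vsd_def asum_def)

lemma vsd_indep:
  assumes d: "d \<noteq> 0"
  shows "lin_indep (Suc m) (vsd d)"
  unfolding lin_indep_def
proof (intro allI impI)
  fix c :: "nat \<Rightarrow> 'a" and i assume s: "(\<Sum>i<Suc m. c i *s vsd d i) = 0" and i: "i < Suc m"
  let ?v = "c 0 *s lift d + asum (\<lambda>j. c (Suc j))"
  have v0: "?v = 0" using s by (simp only: vsd_sum)
  obtain j0 where j0: "d $ j0 \<noteq> 0" using d by (metis vec_eq_iff zero_index)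
  have "?v $ h j0 = c 0 * d $ j0" by simp
  then have c0: "c 0 = 0" using v0 j0 by simp
  show "c i = 0"
  proof (cases i)
    case 0 then show ?thesis using c0 by simp
  next
    case (Suc j)
    then have j: "j < m" using i by simp
    have "?v $ e j = c (Suc j)" using j by simp
    then show ?thesis using v0 Suc by simp
  qed
qed

lemma line_set:
  fixes y d :: "'a::field^3"
  shows "{v. \<exists>t. prj v = y + t *s d} = {lift y + (\<Sum>i<Suc m. c i *s vsd d i) | c. True}"
proof
  show "{v. \<exists>t. prj v = y + t *s d} \<subseteq> {lift y + (\<Sum>i<Suc m. c i *s vsd d i) | c. True}"
  proof
    fix v assume "v \<in> {v. \<exists>t. prj v = y + t *s d}"
    then obtain t where t: "prj v = y + t *s d" by blast
    let ?c = "\<lambda>i. case i of 0 \<Rightarrow> t | Suc j \<Rightarrow> v $ e j"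
    have "v = lift y + (t *s lift d + asum (\<lambda>j. v $ e j))"
    proof (subst vec_eq_iff, rule allI)
      fix i
      from idx_cases[of i] show "v $ i = (lift y + (t *s lift d + asum (\<lambda>j. v $ e j))) $ i"
      proof
        assume "\<exists>j. i = h j"
        then obtain j where [simp]: "i = h j" by blast
        have "prj v $ j = (y + t *s d) $ j" using t by simp
        then show ?thesis by simp
      next
        assume "\<exists>j<m. i = e j"
        then obtain j where [simp]: "i = e j" and j: "j < m" by blast
        show ?thesis using j by simp
      qed
    qed
    also have "\<dots> = lift y + (\<Sum>i<Suc m. ?c i *s vsd d i)" by (subst vsd_sum) simp
    finally show "v \<in> {lift y + (\<Sum>i<Suc m. c i *s vsd d i) | c. True}"
      by (intro CollectI exI[of _ ?c]) simp
  qed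
next
  show "{lift y + (\<Sum>i<Suc m. c i *s vsd d i) | c. True} \<subseteq> {v. \<exists>t. prj v = y + t *s d}"
  proof
    fix v assume "v \<in> {lift y + (\<Sum>i<Suc m. c i *s vsd d i) | c. True}"
    then obtain c where v: "v = lift y + (\<Sum>i<Suc m. c i *s vsd d i)" by blast
    have "prj v = y + c 0 *s d" unfolding v vsd_sum by (simp add: vec_eq_iff)
    then show "v \<in> {v. \<exists>t. prj v = y + t *s d}" by blast
  qed
qed

lemma line_affine:
  assumes d: "d \<noteq> (0::'a::field^3)"
  shows "affine_kspace (Suc m) {v. \<exists>t. prj v = y + t *s d}"
  unfolding affine_kspace_def line_set using vsd_indep[OF d] by blast

lemma line_sum:
  fixes f :: "'a::{finite,field}^'n \<Rightarrow> real" and d :: "'a^3"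
  assumes d: "d \<noteq> 0"
  shows "(\<Sum>t\<in>UNIV. \<Sum>v\<in>{v. prj v = y + t *s d}. f v) = (\<Sum>v\<in>{v. \<exists>t. prj v = y + t *s d}. f v)"
proof -
  let ?S = "{v. \<exists>t. prj v = y + t *s d}"
  obtain j0 where j0: "d $ j0 \<noteq> 0" using d by (metis vec_eq_iff zero_index)
  have uniq: "t = t'" if "y + t *s d = y + t' *s d" for t t'
  proof -
    have "t * d $ j0 = t' * d $ j0" using that by (metis add_left_cancel vector_smult_component)
    then show ?thesis using j0 by simp
  qed
  have "(\<Sum>t\<in>UNIV. \<Sum>v\<in>{v. prj v = y + t *s d}. f v) = (\<Sum>t\<in>UNIV. \<Sum>v\<in>?S. if prj v = y + t *s d then f v else 0)"
  proof (rule sum.cong[OF refl])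
    fix t
    have "{v. prj v = y + t *s d} = ?S \<inter> {v. prj v = y + t *s d}" by blast
    then show "(\<Sum>v\<in>{v. prj v = y + t *s d}. f v) = (\<Sum>v\<in>?S. if prj v = y + t *s d then f v else 0)"
      by (simp add: sum.If_cases)
  qed
  also have "\<dots> = (\<Sum>v\<in>?S. \<Sum>t\<in>UNIV. if prj v = y + t *s d then f v else 0)" by (rule sum.swap)
  also have "\<dots> = (\<Sum>v\<in>?S. f v)"
  proof (rule sum.cong[OF refl])
    fix v assume "v \<in> ?S"
    then obtain t0 where t0: "prj v = y + t0 *s d" by blast
    have iff: "prj v = y + t *s d \<longleftrightarrow> t0 = t" for t
    proof
      assume "prj v = y + t *s d"
      then have "y + t0 *s d = y + t *s d" using t0 by simp
      then show "t0 = t" by (rule uniq)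
    next
      assume "t0 = t"
      then show "prj v = y + t *s d" using t0 by simp
    qed
    have "(\<Sum>t\<in>UNIV. if prj v = y + t *s d then f v else 0) = (\<Sum>t\<in>UNIV. if t0 = t then f v else 0)"
      by (simp only: iff)
    also have "\<dots> = f v" by simp
    finally show "(\<Sum>t\<in>UNIV. if prj v = y + t *s d then f v else 0) = f v" .
  qed
  finally show ?thesis .
qed


lemma ctx_main:
  fixes f :: "'a::{finite,field}^'n \<Rightarrow> real" and L :: "('a^'n) set set"
  assumes CL: "\<forall>S. affine_kspace (Suc m) S \<longrightarrow> (if S \<in> L then 1 else 0) = (\<Sum>p\<in>S. f p)"
  shows "\<exists>mm::int. (\<Sum>p\<in>UNIV. f p) * ((\<Sum>p\<in>UNIV. f p) - 1) / 2 = of_int mm * (real CARD('a) + 1)"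
proof -
  define F where "F z = (\<Sum>v\<in>{v. prj v = z}. f v)" for z :: "'a^3"
  have G01: "(\<Sum>t\<in>UNIV. F (y + t *s d)) \<in> {0,1}" if d: "d \<noteq> 0" for y d
  proof -
    have "(\<Sum>t\<in>UNIV. F (y + t *s d)) = (\<Sum>v\<in>{v. \<exists>t. prj v = y + t *s d}. f v)"
      unfolding F_def by (rule line_sum[OF d])
    also have "\<dots> = (if {v. \<exists>t. prj v = y + t *s d} \<in> L then 1 else 0)"
      using CL line_affine[OF d, of y] by simp
    finally show ?thesis by simp
  qed
  have X: "(\<Sum>z\<in>UNIV. F z) = (\<Sum>p\<in>UNIV. f p)"
    unfolding F_def using sum.group[of UNIV UNIV prj f] by simp
  from core3[OF G01] show ?thesis unfolding X by blast
qed
end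


theorem theorem6p15:
  fixes L :: "('a::{finite,field} ^ 'n) set set" and x :: real
  assumes "CARD('n) \<ge> 3"
    and "cameron_liebler_kset (CARD('n) - 2) L"
    and "x = cl_parameter (CARD('n) - 2) L"
  shows "\<exists>m::int. x * (x - 1) / 2 = real_of_int m * (real CARD('a) + 1)"
proof -
  have N3: "CARD('n) \<ge> 3" by fact
  obtain h :: "3 \<Rightarrow> 'n" where hinj: "inj h"
    using card_le_inj[of "UNIV :: 3 set" "UNIV :: 'n set"] N3 by auto
  define Rest where "Rest = UNIV - range h"
  have cR: "card Rest = CARD('n) - 3"
  proof -
    have "card (range h) = 3" using card_image[OF hinj] by simp
    then show ?thesis unfolding Rest_def by (simp add: card_Diff_subset)
  qed
  obtain e where ebij: "bij_betw e {0..<card Rest} Rest"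
    using ex_bij_betw_nat_finite[of Rest] by auto
  define m where "m = CARD('n) - 3"
  have "bij_betw e {..<m} Rest"
    using ebij cR unfolding m_def by (simp add: atLeast0LessThan)
  then have ebij': "bij_betw e {..<m} (UNIV - range h)" unfolding Rest_def .
  have k: "CARD('n) - 2 = Suc m" using N3 unfolding m_def by simp
  obtain f :: "'a^'n \<Rightarrow> real" where
    f: "\<forall>S. affine_kspace (CARD('n) - 2) S \<longrightarrow> (if S \<in> L then 1 else 0) = (\<Sum>p\<in>S. f p)"
    and cL: "real (card L) = (\<Sum>p\<in>UNIV. f p) * real (card (subs (CARD('n) - 2) :: ('a^'n) set set))"
    using card_L[OF assms(2)] by blast
  have kN: "CARD('n) - 2 \<le> CARD('n)" by simp
  have g: "real (card (subs (CARD('n) - 2) :: ('a^'n) set set)) = gauss_binom CARD('a) CARD('n) (CARD('n) - 2)"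
    by (rule gauss_subs[OF kN])
  have gpos: "gauss_binom CARD('a) CARD('n) (CARD('n) - 2) > 0"
    by (rule gauss_pos[OF kN]) (use card_ge2[where 'a='a] in simp)
  have xf: "x = (\<Sum>p\<in>UNIV. f p)"
    unfolding assms(3) cl_parameter_def cL g using gpos by simp
  have "\<exists>mm::int. (\<Sum>p\<in>UNIV. f p) * ((\<Sum>p\<in>UNIV. f p) - 1) / 2 = of_int mm * (real CARD('a) + 1)"
    by (rule ctx_main[OF hinj ebij']) (use f k in simp)
  then show ?thesis unfolding xf by simp
qed

end
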